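(* Let $\mathbf v\in\mathbb R^{n\times m}_{<0}$, $\mathbf b\in\mathbb R^n_{<0}$, and let $\mathbf z$ be a competitive allocation for $(\mathbf v,\mathbf b)$ with consumption graph $G=G_{\mathbf z}$ and $\mathbf u=\mathbf u(\mathbf z)$. For each chore $j$ let $n_j\ge1$ be the number of agents adjacent to $j$ in $G$, let $\bar{\mathbf z}$ be the allocation with $\bar z_{i,j}=1/n_j$ if $(i,j)\in G$ and $0$ otherwise, and $\bar u_i=u_i(\bar{\mathbf z}_i)$. Let $N^i$ be the set of agents in the connected component of $i$ in $G$, and for $i'\in N^i$ let $\pi_{i,i'}=\pi(\mathcal P)$ for any path $\mathcal P$ from $i$ to $i'$ in $G$ ($\pi_{i,i}=1$). Then for every agent $i$, $$u_i=\frac{b_i}{\sum_{i'\in N^i}b_{i'}}\sum_{i'\in N^i}\pi_{i,i'}\,\bar u_{i'}.$$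
   Context: Setup: agents $[n]$, chores $[m]$, allocations $\mathbf z\in\mathbb R^{n\times m}_{\ge0}$ with column sums $1$, $u_i(\mathbf z_i)=\sum_jv_{i,j}z_{i,j}$. Competitive allocation for budgets $\mathbf b$: there exist prices $\mathbf p\in\mathbb R^m_{<0}$ such that each $\mathbf z_i$ maximizes $u_i$ over bundles $\mathbf x\in\mathbb R^m_{\ge0}$ with $\sum_jp_jx_j\le b_i$. $G_{\mathbf z}$ has edge $(i,j)$ iff $z_{i,j}>0$. For a path $\mathcal P=(i_1,j_1,i_2,\dots,j_L,i_{L+1})$ alternating agents and chores, $\pi(\mathcal P)=\prod_{k=1}^L|v_{i_k,j_k}|/|v_{i_{k+1},j_k}|$ (for a competitive allocation this is path-independent within $G_{\mathbf z}$). *)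

theory Defs
  imports Complex_Main
begin

text \<open>Agents are 0..<n, chores are 0..<m. Valuations v i j, allocations z i j, prices p j.\<close>

definition utility :: "nat \<Rightarrow> (nat \<Rightarrow> nat \<Rightarrow> real) \<Rightarrow> nat \<Rightarrow> (nat \<Rightarrow> real) \<Rightarrow> real" where
  "utility m v i x = (\<Sum>j<m. v i j * x j)"

definition is_allocation :: "nat \<Rightarrow> nat \<Rightarrow> (nat \<Rightarrow> nat \<Rightarrow> real) \<Rightarrow> bool" where
  "is_allocation n m z \<longleftrightarrow>
     (\<forall>i<n. \<forall>j<m. z i j \<ge> 0) \<and> (\<forall>j<m. (\<Sum>i<n. z i j) = 1)"

definition competitive :: "nat \<Rightarrow> nat \<Rightarrow> (nat \<Rightarrow> nat \<Rightarrow> real) \<Rightarrow> (nat \<Rightarrow> real)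
    \<Rightarrow> (nat \<Rightarrow> nat \<Rightarrow> real) \<Rightarrow> bool" where
  "competitive n m v b z \<longleftrightarrow> is_allocation n m z \<and>
     (\<exists>p :: nat \<Rightarrow> real. (\<forall>j<m. p j < 0) \<and>
        (\<forall>i<n. (\<Sum>j<m. p j * z i j) \<le> b i \<and>
           (\<forall>x :: nat \<Rightarrow> real. (\<forall>j<m. x j \<ge> 0) \<longrightarrow> (\<Sum>j<m. p j * x j) \<le> b i
               \<longrightarrow> utility m v i x \<le> utility m v i (z i))))"

text \<open>A path (i_1, j_1, i_2, ..., j_L, i_{L+1}) in the consumption graph G_z, given by the
  agent list is = [i_1,...,i_{L+1}] and the chore list js = [j_1,...,j_L].\<close>
definition is_path :: "nat \<Rightarrow> nat \<Rightarrow> (nat \<Rightarrow> nat \<Rightarrow> real) \<Rightarrow> nat list \<Rightarrow> nat list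
    \<Rightarrow> nat \<Rightarrow> nat \<Rightarrow> bool" where
  "is_path n m z is js a a' \<longleftrightarrow>
     length is = Suc (length js) \<and> (\<forall>a\<in>set is. a < n) \<and> (\<forall>j\<in>set js. j < m) \<and>
     hd is = a \<and> last is = a' \<and>
     (\<forall>k<length js. z (is ! k) (js ! k) > 0 \<and> z (is ! Suc k) (js ! k) > 0)"

definition path_pi :: "(nat \<Rightarrow> nat \<Rightarrow> real) \<Rightarrow> nat list \<Rightarrow> nat list \<Rightarrow> real" where
  "path_pi v is js = (\<Prod>k<length js. \<bar>v (is ! k) (js ! k)\<bar> / \<bar>v (is ! Suc k) (js ! k)\<bar>)"

definition component :: "nat \<Rightarrow> nat \<Rightarrow> (nat \<Rightarrow> nat \<Rightarrow> real) \<Rightarrow> nat \<Rightarrow> nat set" where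
  "component n m z a = {a'. a' < n \<and> (\<exists>is js. is_path n m z is js a a')}"

definition deg_chore :: "nat \<Rightarrow> (nat \<Rightarrow> nat \<Rightarrow> real) \<Rightarrow> nat \<Rightarrow> nat" where
  "deg_chore n z j = card {i. i < n \<and> z i j > 0}"

definition zbar :: "nat \<Rightarrow> (nat \<Rightarrow> nat \<Rightarrow> real) \<Rightarrow> nat \<Rightarrow> nat \<Rightarrow> real" where
  "zbar n z i j = (if z i j > 0 then 1 / real (deg_chore n z j) else 0)"

end

theory Submission
  imports Defs
begin

lemma opt_lemma:
  fixes p vv zj :: "nat \<Rightarrow> real" and bb :: real
  assumes pn: "\<forall>j<m. p j < 0" and vn: "\<forall>j<m. vv j < 0" and zn: "\<forall>j<m. zj j \<ge> 0"
    and feas: "(\<Sum>j<m. p j * zj j) \<le> bb" and bn: "bb < 0"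
    and optx: "\<forall>x. (\<forall>j<m. x j \<ge> 0) \<longrightarrow> (\<Sum>j<m. p j * x j) \<le> bb
                 \<longrightarrow> (\<Sum>j<m. vv j * x j) \<le> (\<Sum>j<m. vv j * zj j)"
  shows "\<exists>r>0. (\<forall>j<m. zj j > 0 \<longrightarrow> vv j = r * p j) \<and> (\<Sum>j<m. p j * zj j) = bb"
proof -
  have m0: "m > 0"
  proof (rule ccontr)
    assume "\<not> m > 0" then have "m = 0" by simp
    with feas bn show False by simp
  qed
  define f where "f j = vv j / p j" for j
  define r where "r = Min (f ` {..<m})"
  have "r \<in> f ` {..<m}" unfolding r_def using m0 by (intro Min_in) auto
  then obtain j0 where j0: "j0 < m" "r = f j0" by auto
  have rle: "\<And>j. j < m \<Longrightarrow> r \<le> f j" unfolding r_def by (intro Min_le) auto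
  have rpos: "r > 0" using j0 pn vn unfolding f_def by (simp add: divide_neg_neg)
  define x where "x j = (if j = j0 then bb / p j0 else 0)" for j
  have xnn: "\<forall>j<m. x j \<ge> 0" using pn j0 bn unfolding x_def
    by (auto simp: divide_neg_neg less_imp_le)
  have "(\<Sum>j<m. p j * x j) = (\<Sum>j<m. if j = j0 then p j0 * (bb / p j0) else 0)"
    by (rule sum.cong) (auto simp: x_def)
  also have "\<dots> = bb" proof - have "p j0 \<noteq> 0" using j0 pn by force then show ?thesis using j0 by simp qed
  finally have xc: "(\<Sum>j<m. p j * x j) = bb" .
  have "(\<Sum>j<m. vv j * x j) = (\<Sum>j<m. if j = j0 then vv j0 * (bb / p j0) else 0)"
    by (rule sum.cong) (auto simp: x_def)
  also have "\<dots> = r * bb" using j0 by (simp add: f_def)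
  finally have xu: "(\<Sum>j<m. vv j * x j) = r * bb" .
  define U where "U = (\<Sum>j<m. vv j * zj j)"
  define s where "s = (\<Sum>j<m. p j * zj j)"
  have "(\<Sum>j<m. vv j * x j) \<le> U" using spec[OF optx, of x] xnn xc unfolding U_def by blast
  with xu have low: "r * bb \<le> U" by simp
  have term_nn: "\<And>j. j < m \<Longrightarrow> 0 \<le> (r * (p j * zj j) - vv j * zj j)"
  proof -
    fix j assume j: "j < m"
    have pz: "p j * zj j \<le> 0" using pn zn j by (simp add: mult_nonpos_nonneg less_imp_le)
    have "p j \<noteq> 0" using pn j by force
    then have "vv j * zj j = f j * (p j * zj j)" unfolding f_def by simp
    moreover have "f j * (p j * zj j) \<le> r * (p j * zj j)"
      using rle[OF j] pz by (simp add: mult_right_mono_neg)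
    ultimately have "vv j * zj j \<le> r * (p j * zj j)" by linarith
    then show "0 \<le> r * (p j * zj j) - vv j * zj j" by simp
  qed
  have "0 \<le> (\<Sum>j<m. r * (p j * zj j) - vv j * zj j)"
    using term_nn by (intro sum_nonneg) auto
  also have "(\<Sum>j<m. r * (p j * zj j) - vv j * zj j) = r * s - U"
    unfolding s_def U_def by (simp add: sum_subtractf sum_distrib_left)
  finally have up: "U \<le> r * s" by simp
  have "r * s \<le> r * bb" using feas rpos unfolding s_def by simp
  with up low have eq1: "U = r * s" and eq2: "r * s = r * bb" by linarith+
  have sb: "s = bb" using eq2 rpos by simp
  have zero: "(\<Sum>j<m. r * (p j * zj j) - vv j * zj j) = 0"
    using eq1 unfolding s_def U_def by (simp add: sum_subtractf sum_distrib_left)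
  have each: "\<forall>j\<in>{..<m}. r * (p j * zj j) - vv j * zj j = 0"
    using sum_nonneg_eq_0_iff[of "{..<m}" "\<lambda>j. r * (p j * zj j) - vv j * zj j"] zero term_nn
    by auto
  have "\<forall>j<m. zj j > 0 \<longrightarrow> vv j = r * p j"
  proof (intro allI impI)
    fix j assume j: "j < m" and zp: "zj j > 0"
    from each j have "(r * p j - vv j) * zj j = 0" by (simp add: algebra_simps)
    with zp show "vv j = r * p j" by simp
  qed
  with rpos sb show ?thesis unfolding s_def by blast
qed

lemma telescope:
  fixes f :: "nat \<Rightarrow> real"
  assumes "\<forall>k\<le>L. f k \<noteq> 0"
  shows "(\<Prod>k<L. f k / f (Suc k)) = f 0 / f L"
  using assms
proof (induction L)
  case 0 then show ?case by simp
next
  case (Suc L)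
  then have "(\<Prod>k<L. f k / f (Suc k)) = f 0 / f L" by simp
  then show ?case using Suc.prems by simp
qed

lemma path_extend:
  assumes P: "is_path n m z as cs a a'" and i2: "i2 < n" and j: "j < m"
    and z1: "z a' j > 0" and z2: "z i2 j > 0"
  shows "is_path n m z (as @ [i2]) (cs @ [j]) a i2"
proof -
  have len: "length as = Suc (length cs)" and ne: "as \<noteq> []" using P unfolding is_path_def by auto
  have la: "as ! length cs = a'" using P len ne unfolding is_path_def by (simp add: last_conv_nth)
  have edges: "\<forall>k<length (cs @ [j]). z ((as @ [i2]) ! k) ((cs @ [j]) ! k) > 0 \<and>
                 z ((as @ [i2]) ! Suc k) ((cs @ [j]) ! k) > 0"
  proof (intro allI impI)
    fix k assume k: "k < length (cs @ [j])"
    show "z ((as @ [i2]) ! k) ((cs @ [j]) ! k) > 0 \<and> z ((as @ [i2]) ! Suc k) ((cs @ [j]) ! k) > 0"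
    proof (cases "k < length cs")
      case True
      then show ?thesis using P len unfolding is_path_def by (auto simp: nth_append)
    next
      case False
      with k have "k = length cs" by simp
      then show ?thesis using la len z1 z2 by (simp add: nth_append)
    qed
  qed
  show ?thesis using P i2 j ne edges unfolding is_path_def by auto
qed

lemma path_value:
  fixes alpha p :: "nat \<Rightarrow> real"
  assumes P: "is_path n m z as cs a a'"
    and al: "\<forall>i<n. alpha i > 0 \<and> (\<forall>j<m. z i j > 0 \<longrightarrow> v i j = alpha i * p j)"
    and pn: "\<forall>j<m. p j < 0"
  shows "path_pi v as cs = alpha a / alpha a'"
proof -
  have len: "length as = Suc (length cs)" and ne: "as \<noteq> []"
    and asn: "\<forall>x\<in>set as. x < n" and csm: "\<forall>x\<in>set cs. x < m"
    and hd: "hd as = a" and lst: "last as = a'"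
    and ed: "\<forall>k<length cs. z (as ! k) (cs ! k) > 0 \<and> z (as ! Suc k) (cs ! k) > 0"
    using P unfolding is_path_def by auto
  have asn': "\<And>k. k \<le> length cs \<Longrightarrow> as ! k < n" using asn len by (simp add: less_Suc_eq_le)
  have fac: "\<bar>v (as ! k) (cs ! k)\<bar> / \<bar>v (as ! Suc k) (cs ! k)\<bar> = alpha (as ! k) / alpha (as ! Suc k)"
    if k: "k < length cs" for k
  proof -
    have c: "cs ! k < m" using csm k by simp
    have a1: "as ! k < n" using asn' k by simp
    have a2: "as ! Suc k < n" using asn' k by simp
    have e1: "v (as ! k) (cs ! k) = alpha (as ! k) * p (cs ! k)" using al a1 c ed k by blast
    have e2: "v (as ! Suc k) (cs ! k) = alpha (as ! Suc k) * p (cs ! k)" using al a2 c ed k by blast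
    have pp: "\<bar>p (cs ! k)\<bar> > 0" using pn c by force
    have g1: "alpha (as ! k) > 0" using al a1 by blast
    have g2: "alpha (as ! Suc k) > 0" using al a2 by blast
    show ?thesis using pp g1 g2 unfolding e1 e2 by (simp add: abs_mult)
  qed
  have "path_pi v as cs = (\<Prod>k<length cs. alpha (as ! k) / alpha (as ! Suc k))"
    unfolding path_pi_def by (rule prod.cong) (auto simp: fac)
  also have "\<dots> = alpha (as ! 0) / alpha (as ! length cs)"
    by (rule telescope[where f = "\<lambda>k. alpha (as ! k)"]) (use al asn' in force)
  also have "as ! 0 = a" using hd ne by (simp add: hd_conv_nth)
  also have "as ! length cs = a'" using lst ne len by (simp add: last_conv_nth)
  finally show ?thesis .
qed


theorem proposition4:
  fixes n m :: nat and v z :: "nat \<Rightarrow> nat \<Rightarrow> real" and b :: "nat \<Rightarrow> real"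
    and i :: nat and pi :: "nat \<Rightarrow> real"
  assumes v_neg: "\<forall>i'<n. \<forall>j<m. v i' j < 0"
    and b_neg: "\<forall>i'<n. b i' < 0"
    and comp: "competitive n m v b z"
    and i: "i < n"
    and pi: "\<forall>i'\<in>component n m z i. \<exists>is js. is_path n m z is js i i' \<and> pi i' = path_pi v is js"
  shows "utility m v i (z i) =
           b i / (\<Sum>i'\<in>component n m z i. b i') *
           (\<Sum>i'\<in>component n m z i. pi i' * utility m v i' (zbar n z i'))"
proof -
  have alloc: "is_allocation n m z" using comp unfolding competitive_def by blast
  have znn: "\<And>a j. a < n \<Longrightarrow> j < m \<Longrightarrow> z a j \<ge> 0" using alloc unfolding is_allocation_def by blast
  have col: "\<And>j. j < m \<Longrightarrow> (\<Sum>a<n. z a j) = 1" using alloc unfolding is_allocation_def by blast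
  obtain p where pn: "\<forall>j<m. p j < 0" and opt: "\<forall>i<n. (\<Sum>j<m. p j * z i j) \<le> b i \<and>
           (\<forall>x :: nat \<Rightarrow> real. (\<forall>j<m. x j \<ge> 0) \<longrightarrow> (\<Sum>j<m. p j * x j) \<le> b i
               \<longrightarrow> utility m v i x \<le> utility m v i (z i))"
    using comp unfolding competitive_def by blast
  have "\<forall>a<n. \<exists>r>0. (\<forall>j<m. z a j > 0 \<longrightarrow> v a j = r * p j) \<and> (\<Sum>j<m. p j * z a j) = b a"
  proof (intro allI impI)
    fix a assume a: "a < n"
    show "\<exists>r>0. (\<forall>j<m. z a j > 0 \<longrightarrow> v a j = r * p j) \<and> (\<Sum>j<m. p j * z a j) = b a"
      by (rule opt_lemma) (use pn v_neg znn opt b_neg a in \<open>auto simp: utility_def\<close>)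
  qed
  then obtain alpha where al0: "\<forall>a<n. alpha a > 0 \<and> (\<forall>j<m. z a j > 0 \<longrightarrow> v a j = alpha a * p j)
      \<and> (\<Sum>j<m. p j * z a j) = b a" by metis
  have al: "\<forall>a<n. alpha a > 0 \<and> (\<forall>j<m. z a j > 0 \<longrightarrow> v a j = alpha a * p j)" using al0 by blast
  have budget: "\<And>a. a < n \<Longrightarrow> (\<Sum>j<m. p j * z a j) = b a" using al0 by blast
  define N where "N = component n m z i"
  have Nsub: "N \<subseteq> {..<n}" unfolding N_def component_def by auto
  have finN: "finite N" using Nsub finite_subset by blast
  have iN: "i \<in> N" unfolding N_def component_def
  proof (intro CollectI conjI i)
    show "\<exists>is js. is_path n m z is js i i"
      by (rule exI[of _ "[i]"], rule exI[of _ "[]"]) (simp add: is_path_def i)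
  qed
  have closed: "\<And>a a2 j. a \<in> N \<Longrightarrow> a2 < n \<Longrightarrow> j < m \<Longrightarrow> z a j > 0 \<Longrightarrow> z a2 j > 0 \<Longrightarrow> a2 \<in> N"
  proof -
    fix a a2 j assume a: "a \<in> N" and a2: "a2 < n" and j: "j < m" and z1: "z a j > 0" and z2: "z a2 j > 0"
    from a obtain as cs where P: "is_path n m z as cs i a" unfolding N_def component_def by blast
    have "is_path n m z (as @ [a2]) (cs @ [j]) i a2" by (rule path_extend[OF P a2 j z1 z2])
    then show "a2 \<in> N" unfolding N_def component_def using a2 by blast
  qed
  define c where "c j = (\<Sum>a\<in>N. z a j)" for j
  have cz: "(\<Sum>a\<in>N. zbar n z a j) = c j" if j: "j < m" for j
  proof (cases "\<exists>a0\<in>N. z a0 j > 0")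
    case True
    then obtain a0 where a0: "a0 \<in> N" "z a0 j > 0" by blast
    define S where "S = {a. a < n \<and> z a j > 0}"
    have SN: "S \<subseteq> N" unfolding S_def using closed a0 j by blast
    have finS: "finite S" unfolding S_def by simp
    have a0S: "a0 \<in> S" unfolding S_def using a0 Nsub by auto
    have cardS: "card S \<ge> 1" using finS a0S by (metis One_nat_def Suc_leI card_gt_0_iff empty_iff)
    have "(\<Sum>a\<in>N. zbar n z a j) = (\<Sum>a\<in>S. 1 / real (card S))"
    proof (rule sum.mono_neutral_cong_right[OF finN SN])
      show "\<forall>a\<in>N - S. zbar n z a j = 0" unfolding zbar_def S_def using Nsub by auto
      show "\<And>x. x \<in> S \<Longrightarrow> zbar n z x j = 1 / real (card S)"
        unfolding zbar_def deg_chore_def S_def by auto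
    qed
    also have "\<dots> = 1" using cardS by simp
    finally have l: "(\<Sum>a\<in>N. zbar n z a j) = 1" .
    have "(\<Sum>a<n. z a j) = (\<Sum>a\<in>N. z a j)"
    proof (rule sum.mono_neutral_right[OF _ Nsub])
      show "finite {..<n}" by simp
      show "\<forall>a\<in>{..<n} - N. z a j = 0"
      proof
        fix a assume a: "a \<in> {..<n} - N"
        then have "\<not> z a j > 0" using closed[of a0 a j] a0 j by auto
        with znn[of a j] a j show "z a j = 0" by auto
      qed
    qed
    then have "c j = 1" using col[OF j] unfolding c_def by simp
    with l show ?thesis by simp
  next
    case False
    have z0: "\<forall>a\<in>N. z a j = 0"
    proof
      fix a assume a: "a \<in> N"
      then have "a < n" using Nsub by auto
      then show "z a j = 0" using znn[of a j] j False a by force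
    qed
    then show ?thesis unfolding c_def zbar_def by simp
  qed
  have sumb: "(\<Sum>a\<in>N. b a) = (\<Sum>j<m. p j * c j)"
  proof -
    have "(\<Sum>a\<in>N. b a) = (\<Sum>a\<in>N. \<Sum>j<m. p j * z a j)"
      using budget Nsub by (intro sum.cong) auto
    also have "\<dots> = (\<Sum>j<m. \<Sum>a\<in>N. p j * z a j)" by (rule sum.swap)
    also have "\<dots> = (\<Sum>j<m. p j * c j)" unfolding c_def by (simp add: sum_distrib_left)
    finally show ?thesis .
  qed
  have termeq: "pi a * utility m v a (zbar n z a) = alpha i * (\<Sum>j<m. p j * zbar n z a j)"
    if a: "a \<in> N" for a
  proof -
    obtain as cs where P: "is_path n m z as cs i a" and pa: "pi a = path_pi v as cs"
      using pi a unfolding N_def by blast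
    have pia: "pi a = alpha i / alpha a" using pa path_value[OF P al pn] by simp
    have an: "a < n" using a Nsub by auto
    have apos: "alpha a > 0" using al an by blast
    have "utility m v a (zbar n z a) = (\<Sum>j<m. alpha a * (p j * zbar n z a j))"
      unfolding utility_def
    proof (rule sum.cong)
      fix j assume j: "j \<in> {..<m}"
      show "v a j * zbar n z a j = alpha a * (p j * zbar n z a j)"
      proof (cases "z a j > 0")
        case True
        then have "v a j = alpha a * p j" using al an j by blast
        then show ?thesis by simp
      next
        case False
        then show ?thesis unfolding zbar_def by simp
      qed
    qed simp
    also have "\<dots> = alpha a * (\<Sum>j<m. p j * zbar n z a j)" by (simp add: sum_distrib_left)
    finally show ?thesis using pia apos by simp
  qed
  have sumpi: "(\<Sum>a\<in>N. pi a * utility m v a (zbar n z a)) = alpha i * (\<Sum>j<m. p j * c j)"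
  proof -
    have "(\<Sum>a\<in>N. pi a * utility m v a (zbar n z a)) = (\<Sum>a\<in>N. alpha i * (\<Sum>j<m. p j * zbar n z a j))"
      using termeq by (rule sum.cong[OF refl])
    also have "\<dots> = alpha i * (\<Sum>j<m. \<Sum>a\<in>N. p j * zbar n z a j)"
      by (simp add: sum_distrib_left sum.swap[of _ N])
    also have "\<dots> = alpha i * (\<Sum>j<m. p j * c j)"
      using cz by (simp add: sum_distrib_left[symmetric])
    finally show ?thesis .
  qed
  have ui: "utility m v i (z i) = alpha i * b i"
  proof -
    have "utility m v i (z i) = (\<Sum>j<m. alpha i * (p j * z i j))"
      unfolding utility_def
    proof (rule sum.cong)
      fix j assume j: "j \<in> {..<m}"
      show "v i j * z i j = alpha i * (p j * z i j)"
      proof (cases "z i j > 0")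
        case True
        then have "v i j = alpha i * p j" using al i j by blast
        then show ?thesis by simp
      next
        case False
        then have "z i j = 0" using znn[of i j] i j by auto
        then show ?thesis by simp
      qed
    qed simp
    also have "\<dots> = alpha i * b i" using budget[OF i] by (simp add: sum_distrib_left[symmetric])
    finally show ?thesis .
  qed
  have Bneg: "(\<Sum>a\<in>N. b a) < 0"
  proof -
    have "(\<Sum>a\<in>N. b a) = b i + (\<Sum>a\<in>N - {i}. b a)" using finN iN by (simp add: sum.remove)
    moreover have "(\<Sum>a\<in>N - {i}. b a) \<le> 0"
      using b_neg Nsub by (intro sum_nonpos) (auto simp: less_imp_le)
    ultimately show ?thesis using b_neg i by force
  qed
  show ?thesis
    unfolding N_def[symmetric] ui sumpi using Bneg sumb by (simp add: field_simps)
qed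

end
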